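(* Let $0<p<\infty$ and $\alpha>-1$. Let $w$ be an analytic function in $\mathbb D$ with $w\not\equiv 0$, and let $\varphi$ be an entire function with $\varphi\not\equiv 0$. Then the weighted superposition operator $S_{\varphi,w}$ maps $A^p_\alpha$ into the Bloch space $\mathcal B$ (i.e. $S_{\varphi,w}(f)\in\mathcal B$ for every $f\in A^p_\alpha$) if and only if $w\in\mathcal B$ and $\varphi$ is constant.
   Context: $\mathbb D=\{z\in\mathbb C:|z|<1\}$ and $\mathcal H(\mathbb D)$ is the space of analytic functions in $\mathbb D$. For $\varphi$ entire and $w\in\mathcal H(\mathbb D)$, the weighted superposition operator is $S_{\varphi,w}(f)(z)=w(z)\,\varphi(f(z))$ for $f\in\mathcal H(\mathbb D)$, $z\in\mathbb D$. For $0<p<\infty$, $\alpha>-1$, the weighted Bergman space $A^p_\alpha$ consists of $f\in\mathcal H(\mathbb D)$ with $\int_{\mathbb D}(1-|z|^2)^\alpha|f(z)|^p\,dA(z)<\infty$, where $dA$ is normalized area measure on $\mathbb D$. The Bloch space $\mathcal B$ consists of $f\in\mathcal H(\mathbb D)$ with $\sup_{z\in\mathbb D}(1-|z|^2)|f'(z)|<\infty$. *)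

theory Defs
  imports "HOL-Analysis.Analysis"
begin

abbreviation disc :: "complex set" where "disc \<equiv> ball 0 1"

text \<open>Weighted Bergman space A^p_alpha with respect to normalized area measure dA = dx dy / pi.\<close>
definition bergman_space :: "real \<Rightarrow> real \<Rightarrow> (complex \<Rightarrow> complex) set" where
  "bergman_space p \<alpha> = {f. f holomorphic_on disc \<and>
     (\<integral>\<^sup>+ z \<in> disc. ennreal ((1 - (cmod z)\<^sup>2) powr \<alpha> * (cmod (f z)) powr p / pi) \<partial>lborel) < \<infinity>}"

definition bloch_space :: "(complex \<Rightarrow> complex) set" where
  "bloch_space = {f. f holomorphic_on disc \<and>
     (\<exists>M. \<forall>z\<in>disc. (1 - (cmod z)\<^sup>2) * cmod (deriv f z) \<le> M)}"

definition wsup_op :: "(complex \<Rightarrow> complex) \<Rightarrow> (complex \<Rightarrow> complex) \<Rightarrow> (complex \<Rightarrow> complex) \<Rightarrow> complex \<Rightarrow> complex" where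
  "wsup_op \<phi> w f = (\<lambda>z. w z * \<phi> (f z))"

end

theory Submission
  imports Defs "HOL-Complex_Analysis.Complex_Analysis"
begin

lemma emeasure_ball_complex: "r \<ge> 0 \<Longrightarrow> emeasure lborel (ball (0::complex) r) = ennreal (pi * r^2)"
  using emeasure_ball[of r "0::complex"] by (simp add: unit_ball_vol_2)

lemma annulus_measure:
  fixes a b :: real assumes "0 \<le> b" "b \<le> a"
  shows "emeasure lborel (ball (0::complex) a - ball 0 b) = ennreal (pi * (a^2 - b^2))"
proof -
  have "ball (0::complex) b \<subseteq> ball 0 a" using assms by auto
  then have "emeasure lborel (ball (0::complex) a - ball 0 b) = emeasure lborel (ball (0::complex) a) - emeasure lborel (ball (0::complex) b)"
    using emeasure_lborel_ball_finite[of "0::complex" b] by (intro emeasure_Diff) auto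
  also have "\<dots> = ennreal (pi * a^2) - ennreal (pi * b^2)" using assms by (simp add: emeasure_ball_complex)
  also have "\<dots> = ennreal (pi * a^2 - pi * b^2)"
    using assms by (intro ennreal_minus) auto
  finally show ?thesis by (simp add: algebra_simps)
qed


lemma radial_int:
  fixes \<beta> :: real assumes b1: "-1 < \<beta>" and b0: "\<beta> \<le> 0"
  shows "(\<integral>\<^sup>+ z. ennreal ((1 - cmod z) powr \<beta>) * indicator disc z \<partial>lborel) < \<infinity>"
proof -
  define A where "A k = ball (0::complex) (1 - (1/2)^(k+1)) - ball 0 (1 - (1/2)^k)" for k :: nat
  define C where "C k = ((1/2::real)^(k+1)) powr \<beta>" for k :: nat
  define q where "q = (1/2::real) powr (\<beta>+1)"
  have q0: "0 < q" unfolding q_def by simp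
  have "(1/2::real) powr (\<beta>+1) < (1/2) powr 0" using b1 by (intro powr_less_mono') auto
  then have q1: "q < 1" by (simp add: q_def)
  have pt: "ennreal ((1 - cmod z) powr \<beta>) * indicator disc z \<le> (\<Sum>k. ennreal (C k) * indicator (A k) z)" for z
  proof (cases "z \<in> disc")
    case False then show ?thesis by simp
  next
    case True
    then have z1: "cmod z < 1" by simp
    have ex: "\<exists>k. cmod z < 1 - (1/2)^(k+1)"
    proof -
      obtain n where "(1/2::real)^n < 1 - cmod z" using real_arch_pow_inv[of "1 - cmod z" "1/2"] z1 by auto
      moreover have "(1/2::real)^(n+1) \<le> (1/2)^n" by (intro power_decreasing) auto
      ultimately show ?thesis by (intro exI[of _ n]) linarith
    qed
    define k where "k = (LEAST k. cmod z < 1 - (1/2)^(k+1))"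
    have k1: "cmod z < 1 - (1/2)^(k+1)" unfolding k_def using LeastI_ex[OF ex] .
    have k2: "cmod z \<ge> 1 - (1/2)^k"
    proof (cases k)
      case 0 then show ?thesis by simp
    next
      case (Suc m)
      have "\<not> cmod z < 1 - (1/2)^(m+1)" using not_less_Least[of m "\<lambda>k. cmod z < 1 - (1/2)^(k+1)"] Suc k_def by auto
      then show ?thesis using Suc by simp
    qed
    have zA: "z \<in> A k" using k1 k2 by (auto simp: A_def)
    have "(1 - cmod z) powr \<beta> \<le> C k" unfolding C_def
      by (rule powr_mono2') (use b0 k1 in auto)
    then have "ennreal ((1 - cmod z) powr \<beta>) * indicator disc z \<le> ennreal (C k) * indicator (A k) z"
      using True zA by (auto intro: ennreal_leI)
    also have "\<dots> \<le> (\<Sum>k. ennreal (C k) * indicator (A k) z)"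
    proof -
      have gen: "(f::nat \<Rightarrow> ennreal) k \<le> suminf f" for f
        using sum_le_suminf[OF summableI, of "{k}" f] by simp
      show ?thesis by (rule gen[of "\<lambda>i. ennreal (C i) * indicator (A i) z"])
    qed
    finally show ?thesis .
  qed
  have Aset[measurable]: "A k \<in> sets borel" for k unfolding A_def by (intro sets.Diff) auto
  have "(\<integral>\<^sup>+ z. ennreal ((1 - cmod z) powr \<beta>) * indicator disc z \<partial>lborel) \<le> (\<integral>\<^sup>+ z. (\<Sum>k. ennreal (C k) * indicator (A k) z) \<partial>lborel)"
    by (intro nn_integral_mono pt)
  also have "\<dots> = (\<Sum>k. \<integral>\<^sup>+ z. ennreal (C k) * indicator (A k) z \<partial>lborel)"
    by (intro nn_integral_suminf) measurable
  also have "\<dots> = (\<Sum>k. ennreal (C k) * emeasure lborel (A k))"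
    by (intro suminf_cong nn_integral_cmult_indicator) auto
  also have "\<dots> \<le> (\<Sum>k. ennreal (2 * pi * q^(k+1)))"
  proof (intro suminf_le summableI)
    fix k :: nat
    define a b where "a = 1 - (1/2::real)^(k+1)" and "b = 1 - (1/2::real)^k"
    have b_nn: "0 \<le> b" unfolding b_def by (simp add: power_le_one)
    have ba: "b \<le> a" unfolding a_def b_def by (simp add: power_decreasing)
    have em: "emeasure lborel (A k) = ennreal (pi * (a^2 - b^2))"
      unfolding A_def a_def[symmetric] b_def[symmetric] using b_nn ba by (rule annulus_measure)
    have ab: "a^2 - b^2 \<le> 2 * (1/2)^(k+1)"
    proof -
      have "a^2 - b^2 = (a - b) * (a + b)" by (simp add: power2_eq_square algebra_simps)
      also have "a - b = (1/2)^(k+1)" by (simp add: a_def b_def)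
      also have "a + b \<le> 2" by (simp add: a_def b_def)
      finally show ?thesis by (simp add: mult_left_mono)
    qed
    have Cq: "C k * (2 * (1/2)^(k+1)) = 2 * q^(k+1)"
    proof -
      have "C k * (1/2)^(k+1) = ((1/2::real)^(k+1)) powr (\<beta>+1)"
        by (simp add: C_def powr_add)
      also have "\<dots> = ((1/2::real) powr (real (k+1))) powr (\<beta>+1)"
        by (subst powr_realpow) auto
      also have "\<dots> = q^(k+1)" unfolding q_def powr_powr
        by (subst powr_power) (auto simp: mult.commute)
      finally show ?thesis by simp
    qed
    have C0: "C k \<ge> 0" by (simp add: C_def)
    have "C k * (pi * (a^2 - b^2)) \<le> C k * (pi * (2 * (1/2)^(k+1)))"
      using C0 ab by (intro mult_left_mono) auto
    also have "\<dots> = 2 * pi * q^(k+1)" using Cq by (simp add: algebra_simps)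
    finally have le: "C k * (pi * (a^2 - b^2)) \<le> 2 * pi * q^(k+1)" .
    show "ennreal (C k) * emeasure lborel (A k) \<le> ennreal (2 * pi * q^(k+1))"
      unfolding em using C0 le by (simp add: ennreal_mult'[symmetric] ennreal_leI)
  qed
  also have "\<dots> = ennreal (\<Sum>k. 2 * pi * q^(k+1))"
    using q0 q1 by (intro suminf_ennreal2) (auto intro!: summable_mult summable_geometric simp: power_Suc)
  also have "\<dots> < \<infinity>" by simp
  finally show ?thesis .
qed

lemma bergman_mem:
  fixes p \<alpha> \<gamma> B :: real and f :: "complex \<Rightarrow> complex"
  assumes p: "0 < p" and a: "\<alpha> > -1" and hol: "f holomorphic_on disc"
    and g0: "0 \<le> \<gamma>" and gp: "\<gamma> * p \<le> (1 + min \<alpha> 0) / 2" and B0: "0 \<le> B"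
    and bd: "\<And>z. z \<in> disc \<Longrightarrow> cmod (f z) \<le> B * (1 - cmod z) powr (-\<gamma>)"
  shows "f \<in> bergman_space p \<alpha>"
proof -
  define a' where "a' = min \<alpha> 0"
  define \<beta> where "\<beta> = a' - \<gamma> * p"
  define K where "K = B powr p / pi"
  have b1: "-1 < \<beta>" using gp a by (simp add: \<beta>_def a'_def)
  have b0: "\<beta> \<le> 0" using g0 p by (simp add: \<beta>_def a'_def min_le_iff_disj)
  have pt: "ennreal ((1 - (cmod z)\<^sup>2) powr \<alpha> * (cmod (f z)) powr p / pi) * indicator disc z
      \<le> ennreal K * (ennreal ((1 - cmod z) powr \<beta>) * indicator disc z)" for z
  proof (cases "z \<in> disc")
    case False then show ?thesis by simp
  next
    case True
    then have z1: "cmod z < 1" by simp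
    have pos: "0 < 1 - cmod z" using z1 by simp
    have h1: "(1 - (cmod z)\<^sup>2) powr \<alpha> \<le> (1 - cmod z) powr a'"
    proof (cases "\<alpha> \<ge> 0")
      case True
      have "(1 - (cmod z)\<^sup>2) powr \<alpha> \<le> 1"
        using True z1 by (intro powr_le1) (auto simp: abs_le_iff power_le_one)
      then show ?thesis using True by (simp add: a'_def)
    next
      case False
      have "(1 - (cmod z)\<^sup>2) powr \<alpha> \<le> (1 - cmod z) powr \<alpha>"
        using False pos z1 by (intro powr_mono2') (auto simp: power2_eq_square mult_left_le_one_le)
      then show ?thesis using False by (simp add: a'_def)
    qed
    have h2: "(cmod (f z)) powr p \<le> B powr p * (1 - cmod z) powr (- \<gamma> * p)"
    proof -
      have "(cmod (f z)) powr p \<le> (B * (1 - cmod z) powr (-\<gamma>)) powr p"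
        using bd[OF True] p by (intro powr_mono2) auto
      also have "\<dots> = B powr p * (1 - cmod z) powr (- \<gamma> * p)"
        using B0 pos by (simp add: powr_mult powr_powr)
      finally show ?thesis .
    qed
    have "(1 - (cmod z)\<^sup>2) powr \<alpha> * (cmod (f z)) powr p / pi \<le> (1 - cmod z) powr a' * (B powr p * (1 - cmod z) powr (- \<gamma> * p)) / pi"
      using h1 h2 by (intro divide_right_mono mult_mono) auto
    also have "\<dots> = K * (1 - cmod z) powr \<beta>"
      using pos by (simp add: K_def \<beta>_def powr_add[symmetric] algebra_simps)
    finally have "(1 - (cmod z)\<^sup>2) powr \<alpha> * (cmod (f z)) powr p / pi \<le> K * (1 - cmod z) powr \<beta>" .
    then show ?thesis using True by (simp add: ennreal_mult'[symmetric] ennreal_leI K_def)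
  qed
  have "(\<integral>\<^sup>+ z \<in> disc. ennreal ((1 - (cmod z)\<^sup>2) powr \<alpha> * (cmod (f z)) powr p / pi) \<partial>lborel)
      \<le> (\<integral>\<^sup>+ z. ennreal K * (ennreal ((1 - cmod z) powr \<beta>) * indicator disc z) \<partial>lborel)"
    by (intro nn_integral_mono pt)
  also have "\<dots> = ennreal K * (\<integral>\<^sup>+ z. ennreal ((1 - cmod z) powr \<beta>) * indicator disc z \<partial>lborel)"
  proof (intro nn_integral_cmult)
    have [measurable]: "disc \<in> sets borel" by simp
    show "(\<lambda>z. ennreal ((1 - cmod z) powr \<beta>) * indicator disc z) \<in> borel_measurable lborel" by measurable
  qed
  also have "\<dots> < \<infinity>" using radial_int[OF b1 b0] by (simp add: ennreal_mult_less_top)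
  finally show ?thesis using hol unfolding bergman_space_def by auto
qed

lemma bloch_growth:
  assumes "g \<in> bloch_space"
  obtains M where "M \<ge> 0" and
    "\<And>K u. cmod u = 1 \<Longrightarrow> cmod (g (of_real (1 - (1/2)^K) * u) - g 0) \<le> M * real K"
proof -
  have hol: "g holomorphic_on disc" using assms unfolding bloch_space_def by blast
  from assms obtain M0 where
    M0: "\<And>z. z \<in> disc \<Longrightarrow> (1 - (cmod z)\<^sup>2) * cmod (deriv g z) \<le> M0"
    unfolding bloch_space_def mem_Collect_eq by blast
  have M0pos: "M0 \<ge> 0" using M0[of 0] by simp (meson norm_ge_zero order.trans)
  define t where "t k = (1 - (1/2::real)^k)" for k :: nat
  have step: "cmod (g (of_real (t (Suc k)) * u) - g (of_real (t k) * u)) \<le> M0" if u: "cmod u = 1" for k u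
  proof -
    define S where "S = closed_segment (of_real (t (Suc k)) * u) (of_real (t k) * u)"
    have tk: "0 \<le> t k" "t k \<le> t (Suc k)" "t (Suc k) < 1" for k
      by (auto simp: t_def power_le_one)
    have Ssub: "S \<subseteq> cball 0 (t (Suc k))"
      unfolding S_def using tk u
      by (intro closed_segment_subset) (auto simp: norm_mult)
    have Sdisc: "S \<subseteq> disc" using Ssub tk(3)[of k] by (auto simp: subset_iff)
    have der: "(g has_field_derivative deriv g z) (at z within S)" if "z \<in> S" for z
    proof -
      have "g field_differentiable at z"
        using hol Sdisc that by (meson holomorphic_on_imp_differentiable_at open_ball subsetD)
      then show ?thesis
        by (simp add: DERIV_deriv_iff_field_differentiable has_field_derivative_at_within)
    qed
    have bnd: "cmod (deriv g z) \<le> M0 * 2^(Suc k)" if "z \<in> S" for z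
    proof -
      have nz: "cmod z \<le> t (Suc k)" using Ssub that by auto
      have lowb: "(1/2)^(Suc k) \<le> 1 - (cmod z)\<^sup>2"
      proof -
        have "cmod z < 1" using nz tk(3)[of k] by simp
        then have "(cmod z)\<^sup>2 \<le> cmod z" by (simp add: power2_eq_square mult_left_le_one_le)
        then show ?thesis using nz by (simp add: t_def)
      qed
      have "(1/2)^(Suc k) * cmod (deriv g z) \<le> (1 - (cmod z)\<^sup>2) * cmod (deriv g z)"
        using lowb by (intro mult_right_mono) auto
      also have "\<dots> \<le> M0" using M0 Sdisc that by auto
      finally have "(1/2)^(Suc k) * cmod (deriv g z) \<le> M0" .
      then show ?thesis by (simp add: field_simps power_divide)
    qed
    have "cmod (g (of_real (t (Suc k)) * u) - g (of_real (t k) * u)) \<le> M0 * 2^(Suc k) * cmod (of_real (t (Suc k)) * u - of_real (t k) * u)"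
    proof (rule field_differentiable_bound[OF _ der bnd])
      show "convex S" by (simp add: S_def)
    qed (auto simp: S_def)
    also have "cmod (of_real (t (Suc k)) * u - of_real (t k) * u) = (1/2)^(Suc k)"
    proof -
      have e1: "of_real (t (Suc k)) * u - of_real (t k) * u = of_real (t (Suc k) - t k) * u"
        by (simp only: of_real_diff left_diff_distrib)
      have e2: "t (Suc k) - t k = (1/2)^(Suc k)" by (simp add: t_def)
      show ?thesis unfolding e1 e2 norm_mult norm_of_real using u by simp
    qed
    also have "M0 * 2^(Suc k) * (1/2)^(Suc k) = M0" by (simp add: power_divide)
    finally show ?thesis .
  qed
  have "cmod (g (of_real (t K) * u) - g 0) \<le> M0 * real K" if u: "cmod u = 1" for K u
  proof (induction K)
    case 0 then show ?case by (simp add: t_def)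
  next
    case (Suc K)
    have "cmod (g (of_real (t (Suc K)) * u) - g 0) \<le> cmod (g (of_real (t (Suc K)) * u) - g (of_real (t K) * u)) + cmod (g (of_real (t K) * u) - g 0)"
      using norm_triangle_ineq[of "g (of_real (t (Suc K)) * u) - g (of_real (t K) * u)" "g (of_real (t K) * u) - g 0"] by simp
    also have "\<dots> \<le> M0 + M0 * real K" using step[OF u, of K] Suc by simp
    finally show ?case by (simp add: algebra_simps)
  qed
  then show ?thesis using that[of M0] M0pos by (simp add: t_def)
qed

lemma exp_beats_linear:
  fixes A b D E :: real assumes A: "A > 0" and b: "b > 0"
  shows "\<exists>K0. \<forall>K\<ge>K0. D + E * (real K + 1) \<le> A * 2 powr (real K * b)"
proof -
  define \<beta> where "\<beta> = b * ln 2"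
  have \<beta>: "\<beta> > 0" using b by (simp add: \<beta>_def)
  define T where "T = 4 * (\<bar>D\<bar> + 2 * \<bar>E\<bar>) / (A * \<beta>^2)"
  define K0 where "K0 = nat \<lceil>T\<rceil> + 1"
  have "D + E * (real K + 1) \<le> A * 2 powr (real K * b)" if K: "K \<ge> K0" for K
  proof -
    have K1: "real K \<ge> 1" using K by (simp add: K0_def)
    have KT: "real K \<ge> T" using K unfolding K0_def by linarith
    define x where "x = real K * \<beta>"
    have x0: "x \<ge> 0" using \<beta> by (simp add: x_def)
    have "2 powr (real K * b) = exp x" by (simp add: powr_def x_def \<beta>_def mult.commute mult.left_commute)
    also have "exp x = exp (x/2)^2" by (simp add: power2_eq_square exp_add[symmetric])
    also have "exp (x/2)^2 \<ge> (x/2)^2"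
    proof (intro power_mono)
      show "x/2 \<le> exp (x/2)" using exp_ge_add_one_self[of "x/2"] by linarith
    qed (use x0 in auto)
    finally have e: "2 powr (real K * b) \<ge> (x/2)^2" .
    have eq: "A * (x/2)^2 = (A * \<beta>^2 / 4) * real K * real K" by (simp add: x_def power2_eq_square)
    have m1: "(A * \<beta>^2 / 4) * T \<le> (A * \<beta>^2 / 4) * real K"
      using KT A \<beta> by (intro mult_left_mono) auto
    have m2: "(A * \<beta>^2 / 4) * T * real K \<le> (A * \<beta>^2 / 4) * real K * real K"
      using m1 K1 by (intro mult_right_mono) auto
    have T': "(A * \<beta>^2 / 4) * T = \<bar>D\<bar> + 2 * \<bar>E\<bar>" using A \<beta> by (simp add: T_def)
    have T'': "(\<bar>D\<bar> + 2 * \<bar>E\<bar>) * real K = (A * \<beta>^2 / 4) * T * real K" by (simp only: T')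
    have "A * (x/2)^2 \<ge> (\<bar>D\<bar> + 2 * \<bar>E\<bar>) * real K" using eq m2 T'' by linarith
    moreover have "(\<bar>D\<bar> + 2 * \<bar>E\<bar>) * real K \<ge> D + E * (real K + 1)"
    proof -
      have "(\<bar>D\<bar> + 2 * \<bar>E\<bar>) * real K = \<bar>D\<bar> * real K + \<bar>E\<bar> * real K + \<bar>E\<bar> * real K" by (simp add: algebra_simps)
      moreover have "\<bar>D\<bar> * 1 \<le> \<bar>D\<bar> * real K" using K1 by (intro mult_left_mono) auto
      moreover have "\<bar>E\<bar> * 1 \<le> \<bar>E\<bar> * real K" using K1 by (intro mult_left_mono) auto
      moreover have "D \<le> \<bar>D\<bar>" by simp
      moreover have "\<bar>E\<bar> * real K \<ge> E * real K" using K1 by (intro mult_right_mono) auto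
      moreover have "E \<le> \<bar>E\<bar>" by simp
      ultimately show ?thesis by (simp add: algebra_simps)
    qed
    moreover have "A * (x/2)^2 \<le> A * 2 powr (real K * b)" using e A by simp
    ultimately show ?thesis by linarith
  qed
  then show ?thesis by blast
qed

lemma w_large:
  assumes hol: "w holomorphic_on disc" and z1: "z1 \<in> disc" and r1: "cmod z1 < r" and r2: "r < 1"
  shows "\<exists>a. cmod a = r \<and> cmod (w z1) \<le> cmod (w a)"
proof -
  have r0: "r > 0" using r1 norm_ge_zero[of z1] by linarith
  have cont: "continuous_on (sphere 0 r) (\<lambda>z. cmod (w z))"
    using hol r2 by (intro continuous_intros holomorphic_on_imp_continuous_on[THEN continuous_on_subset]) auto
  obtain a where a: "a \<in> sphere 0 r" and amax: "\<And>y. y \<in> sphere 0 r \<Longrightarrow> cmod (w y) \<le> cmod (w a)"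
    using continuous_attains_sup[OF compact_sphere _ cont] r0 by (auto simp: sphere_def) (metis dist_0_norm less_le norm_of_real real_norm_def abs_of_pos vector_choose_size)
  have "cmod (w z1) \<le> cmod (w a)"
  proof (rule maximum_modulus_frontier[of w "ball 0 r"])
    show "w holomorphic_on interior (ball 0 r)" using hol r2 by (auto intro: holomorphic_on_subset)
    show "continuous_on (closure (ball 0 r)) w"
      using hol r2 r0 by (auto intro: holomorphic_on_imp_continuous_on[THEN continuous_on_subset])
  qed (use r0 r1 amax in auto)
  then show ?thesis using a by auto
qed

lemma phi_growth:
  fixes \<phi> :: "complex \<Rightarrow> complex"
  assumes hol: "\<phi> holomorphic_on UNIV" and nc: "\<not> (\<exists>c. \<forall>z. \<phi> z = c)"
  shows "\<exists>c>0. \<exists>\<rho>\<ge>0. \<forall>R>0. \<exists>\<zeta>. cmod \<zeta> \<le> R + \<rho> \<and> c * R \<le> cmod (\<phi> \<zeta>)"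
proof -
  obtain z0 where z0: "deriv \<phi> z0 \<noteq> 0"
  proof (rule ccontr)
    assume "\<not> thesis"
    with that have d0: "\<And>z. deriv \<phi> z = 0" by blast
    have "\<exists>c. \<forall>x\<in>UNIV. \<phi> x = c"
    proof (rule has_field_derivative_zero_constant)
      fix x :: complex
      show "(\<phi> has_field_derivative 0) (at x within UNIV)"
        using holomorphic_derivI[OF hol open_UNIV, of x UNIV] d0 by simp
    qed simp
    with nc show False by auto
  qed
  define c where "c = cmod (deriv \<phi> z0) / 2"
  have c0: "c > 0" using z0 by (simp add: c_def)
  have "\<exists>\<zeta>. cmod \<zeta> \<le> R + cmod z0 \<and> c * R \<le> cmod (\<phi> \<zeta>)" if R: "R > 0" for R
  proof (rule ccontr)
    assume "\<not> ?thesis"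
    then have lt: "\<And>\<zeta>. cmod \<zeta> \<le> R + cmod z0 \<Longrightarrow> cmod (\<phi> \<zeta>) < c * R" by force
    have "norm ((deriv ^^ 1) \<phi> z0) \<le> (fact 1) * (c * R) / R^1"
    proof (rule Cauchy_inequality)
      show "\<phi> holomorphic_on ball z0 R" using hol by (rule holomorphic_on_subset) auto
      show "continuous_on (cball z0 R) \<phi>"
        using hol holomorphic_on_imp_continuous_on continuous_on_subset by blast
      fix x assume "norm (z0 - x) = R"
      then have "cmod x \<le> R + cmod z0" using norm_triangle_ineq2[of x z0] norm_minus_commute[of z0 x] by linarith
      then show "cmod (\<phi> x) \<le> c * R" using lt by (simp add: less_imp_le)
    qed (use R in auto)
    then have "cmod (deriv \<phi> z0) \<le> c" using R by simp
    then show False using c0 by (simp add: c_def)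
  qed
  then show ?thesis using c0 by (intro exI[of _ c] conjI exI[of _ "cmod z0"]) auto
qed

definition kern :: "real \<Rightarrow> complex \<Rightarrow> complex \<Rightarrow> complex" where
  "kern g u z = exp (- of_real g * Ln (1 - cnj u * z))"

lemma kern_Re:
  assumes u: "cmod u = 1" and z: "z \<in> disc"
  shows "Re (1 - cnj u * z) > 0" "cmod (1 - cnj u * z) \<ge> 1 - cmod z"
proof -
  have n: "cmod (cnj u * z) = cmod z" using u by (simp add: norm_mult)
  have "Re (cnj u * z) \<le> cmod (cnj u * z)" by (rule complex_Re_le_cmod)
  then show "Re (1 - cnj u * z) > 0" using n z by simp
  show "cmod (1 - cnj u * z) \<ge> 1 - cmod z" using norm_triangle_ineq2[of 1 "cnj u * z"] n by simp
qed

lemma kern_hol: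
  assumes u: "cmod u = 1" shows "kern g u holomorphic_on disc"
proof -
  have L: "(\<lambda>z. Ln (1 - cnj u * z)) holomorphic_on disc"
  proof (rule holomorphic_on_Ln')
    fix z assume "z \<in> disc"
    then have "Re (1 - cnj u * z) > 0" using kern_Re[OF u] by blast
    then show "1 - cnj u * z \<notin> \<real>\<^sub>\<le>\<^sub>0" using complex_nonpos_Reals_iff by (metis not_le)
  qed (intro holomorphic_intros)
  show ?thesis unfolding kern_def by (intro holomorphic_on_exp' holomorphic_on_mult holomorphic_on_const L)
qed

lemma kern_norm:
  assumes u: "cmod u = 1" and z: "z \<in> disc"
  shows "cmod (kern g u z) = (cmod (1 - cnj u * z)) powr (-g)"
proof -
  have nz: "1 - cnj u * z \<noteq> 0" using kern_Re(1)[OF u z] by (metis less_irrefl zero_complex.simps(1))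
  have "cmod (kern g u z) = exp (Re (- of_real g * Ln (1 - cnj u * z)))"
    by (simp add: kern_def norm_exp_eq_Re)
  also have "Re (- of_real g * Ln (1 - cnj u * z)) = - g * ln (cmod (1 - cnj u * z))"
    using nz by simp
  also have "exp (- g * ln (cmod (1 - cnj u * z))) = (cmod (1 - cnj u * z)) powr (-g)"
    using nz by (simp add: powr_def)
  finally show ?thesis .
qed

lemma kern_bound:
  assumes u: "cmod u = 1" and z: "z \<in> disc" and g: "0 \<le> g" and gg: "g \<le> G"
  shows "cmod (kern g u z) \<le> (1 - cmod z) powr (-G)"
proof -
  have pos: "0 < 1 - cmod z" using z by simp
  have "cmod (kern g u z) \<le> (1 - cmod z) powr (-g)"
    unfolding kern_norm[OF u z] using g pos kern_Re(2)[OF u z] by (intro powr_mono2') auto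
  also have "\<dots> \<le> (1 - cmod z) powr (-G)" using pos gg by (intro powr_mono') auto
  finally show ?thesis .
qed

lemma kern_at:
  assumes u: "cmod u = 1" and s: "0 < s"
  shows "kern g u (of_real (1 - s) * u) = of_real (s powr (-g))"
proof -
  have uu: "cnj u * u = 1" using complex_norm_square[of u] u by (simp add: mult.commute)
  have h: "cnj u * (of_real (1 - s) * u) = of_real (1 - s)" by (metis uu mult.left_commute mult.right_neutral)
  have "1 - cnj u * (of_real (1 - s) * u) = of_real s" unfolding h by simp
  then have "kern g u (of_real (1 - s) * u) = exp (- of_real g * of_real (ln s))"
    using s by (simp add: kern_def Ln_of_real)
  also have "\<dots> = of_real (exp (- g * ln s))" by (simp flip: exp_of_real)
  also have "exp (- g * ln s) = s powr (-g)" using s by (simp add: powr_def)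
  finally show ?thesis .
qed

lemma half_pow_powr: "((1/2::real)^K) powr (-g) = 2 powr (real K * g)"
proof -
  have "(1/2::real)^K = 2 powr (- real K)" by (simp add: powr_minus powr_realpow power_one_over inverse_eq_divide)
  then show ?thesis by (simp add: powr_powr)
qed

lemma step_lemma:
  fixes \<phi> w S :: "complex \<Rightarrow> complex" and B \<tau> c \<rho> g0 g1 :: real and n :: nat
  assumes phol: "\<phi> holomorphic_on UNIV"
    and c0: "c > 0" and growth: "\<And>R. R > 0 \<Longrightarrow> \<exists>\<zeta>. cmod \<zeta> \<le> R + \<rho> \<and> c * R \<le> cmod (\<phi> \<zeta>)"
    and whol: "w holomorphic_on disc" and z1: "z1 \<in> disc"
    and g0: "0 \<le> g0" and g01: "g0 < g1"
    and Sh: "S holomorphic_on disc" and Sb: "\<And>z. z \<in> disc \<Longrightarrow> cmod (S z) \<le> B * (1 - cmod z) powr (- g0)"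
    and B0: "B \<ge> 0" and \<tau>0: "\<tau> > 0"
  shows "\<exists>u cc K \<zeta> \<epsilon>. cmod u = 1 \<and> cmod cc \<le> (1/2)^(Suc n) * \<tau> \<and> \<epsilon> > 0 \<and>
      cmod (w z1) \<le> cmod (w (of_real (1 - (1/2)^K) * u)) \<and>
      S (of_real (1 - (1/2)^K) * u) + cc * kern g1 u (of_real (1 - (1/2)^K) * u) = \<zeta> \<and>
      real (Suc n) * (real K + 1) \<le> cmod (\<phi> \<zeta>) \<and>
      (\<forall>e. cmod e \<le> \<epsilon> \<longrightarrow> cmod (\<phi> (\<zeta> + e) - \<phi> \<zeta>) \<le> 1)"
proof -
  define b where "b = g1 - g0"
  have b0: "b > 0" using g01 by (simp add: b_def)
  define A where "A = (1/2::real)^(n+2) * \<tau>"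
  have A0: "A > 0" using \<tau>0 by (simp add: A_def)
  obtain K1 where K1: "\<And>K. K \<ge> K1 \<Longrightarrow> B + 0 * (real K + 1) \<le> A * 2 powr (real K * b)"
    using exp_beats_linear[OF A0 b0, of B 0] by blast
  obtain K2 where K2: "\<And>K. K \<ge> K2 \<Longrightarrow> c * \<rho> + real (Suc n) * (real K + 1) \<le> (c * A) * 2 powr (real K * b)"
    using exp_beats_linear[of "c * A" b "c * \<rho>" "real (Suc n)"] c0 A0 b0 by (auto simp: mult_pos_pos)
  have z11: "cmod z1 < 1" using z1 by simp
  obtain K3 where K3: "(1/2::real)^K3 < 1 - cmod z1"
    using real_arch_pow_inv[of "1 - cmod z1" "1/2"] z11 by auto
  define K where "K = max K1 (max K2 K3)"
  have hK1: "B \<le> A * 2 powr (real K * b)" using K1[of K] by (simp add: K_def)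
  have hK2: "c * \<rho> + real (Suc n) * (real K + 1) \<le> (c * A) * 2 powr (real K * b)" using K2[of K] by (simp add: K_def)
  have hK3: "(1/2::real)^K < 1 - cmod z1"
  proof -
    have "(1/2::real)^K \<le> (1/2)^K3" by (intro power_decreasing) (auto simp: K_def)
    then show ?thesis using K3 by linarith
  qed
  define r where "r = 1 - (1/2::real)^K"
  have r1: "cmod z1 < r" "r < 1" using hK3 by (auto simp: r_def)
  obtain a where a: "cmod a = r" and wa: "cmod (w z1) \<le> cmod (w a)"
    using w_large[OF whol z1 r1] by blast
  have r0: "r > 0" using r1 norm_ge_zero[of z1] by linarith
  define u where "u = a / of_real r"
  have u1: "cmod u = 1" using a r0 by (simp add: u_def norm_divide)
  have au: "a = of_real r * u" using r0 by (simp add: u_def)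
  have adisc: "a \<in> disc" using a r1 by simp
  define P where "P = 2 powr (real K * g1)"
  have P0: "P > 0" by (simp add: P_def)
  have Psplit: "P = 2 powr (real K * g0) * 2 powr (real K * b)"
    by (simp add: P_def b_def powr_add[symmetric] algebra_simps)
  have Sa: "cmod (S a) \<le> A * P"
  proof -
    have "cmod (S a) \<le> B * (1 - cmod a) powr (- g0)" using Sb[OF adisc] .
    also have "(1 - cmod a) powr (- g0) = 2 powr (real K * g0)" using a by (simp add: r_def half_pow_powr)
    also have "B * 2 powr (real K * g0) \<le> (A * 2 powr (real K * b)) * 2 powr (real K * g0)"
      using hK1 by (intro mult_right_mono) auto
    also have "\<dots> = A * P" using Psplit by (simp add: algebra_simps)
    finally show ?thesis .
  qed
  have Pb: "2 powr (real K * b) \<le> P"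
  proof -
    have "1 \<le> 2 powr (real K * g0)" using g0 by (simp add: ge_one_powr_ge_zero)
    then have "1 * 2 powr (real K * b) \<le> 2 powr (real K * g0) * 2 powr (real K * b)"
      by (intro mult_right_mono) auto
    then show ?thesis using Psplit by simp
  qed
  have cAP: "c * \<rho> + real (Suc n) * (real K + 1) \<le> c * (A * P)"
  proof -
    have "(c * A) * 2 powr (real K * b) \<le> (c * A) * P" using Pb c0 A0 by (intro mult_left_mono) auto
    then show ?thesis using hK2 by (simp add: algebra_simps)
  qed
  have Rpos: "A * P - \<rho> > 0"
  proof -
    have "0 < real (Suc n) * (real K + 1)" by simp
    then have "c * \<rho> < c * (A * P)" using cAP by linarith
    then show ?thesis using c0 by simp
  qed
  obtain \<zeta> where \<zeta>1: "cmod \<zeta> \<le> (A * P - \<rho>) + \<rho>" and \<zeta>2: "c * (A * P - \<rho>) \<le> cmod (\<phi> \<zeta>)"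
    using growth[OF Rpos] by blast
  have \<zeta>big: "real (Suc n) * (real K + 1) \<le> cmod (\<phi> \<zeta>)"
    using \<zeta>2 cAP by (simp add: algebra_simps)
  define cc where "cc = (\<zeta> - S a) / of_real P"
  have kat: "kern g1 u a = of_real P"
    unfolding au r_def using kern_at[OF u1, of "(1/2)^K" g1] by (simp add: half_pow_powr P_def)
  have eq: "S a + cc * kern g1 u a = \<zeta>" using P0 by (simp add: kat cc_def)
  have ccb: "cmod cc \<le> (1/2)^(Suc n) * \<tau>"
  proof -
    have "cmod (\<zeta> - S a) \<le> cmod \<zeta> + cmod (S a)" by (rule norm_triangle_ineq4)
    also have "\<dots> \<le> 2 * (A * P)" using \<zeta>1 Sa by simp
    finally have "cmod (\<zeta> - S a) / P \<le> 2 * A" using P0 by (simp add: divide_simps)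
    moreover have "cmod cc = cmod (\<zeta> - S a) / P" using P0 by (simp add: cc_def norm_divide)
    moreover have "2 * A = (1/2)^(Suc n) * \<tau>" by (simp add: A_def)
    ultimately show ?thesis by simp
  qed
  have ic: "isCont \<phi> \<zeta>"
    using holomorphic_on_imp_continuous_on[OF phol] continuous_on_eq_continuous_at[OF open_UNIV, of \<phi>] by blast
  then obtain s where s0: "s > 0" and s: "\<And>x. x \<noteq> \<zeta> \<and> norm (x - \<zeta>) < s \<Longrightarrow> norm (\<phi> x - \<phi> \<zeta>) < 1"
    using LIM_D[OF isContD[OF ic] zero_less_one] by auto
  have cont: "\<forall>e. cmod e \<le> s/2 \<longrightarrow> cmod (\<phi> (\<zeta> + e) - \<phi> \<zeta>) \<le> 1"
  proof (intro allI impI)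
    fix e :: complex assume e: "cmod e \<le> s/2"
    show "cmod (\<phi> (\<zeta> + e) - \<phi> \<zeta>) \<le> 1"
    proof (cases "e = 0")
      case True then show ?thesis by simp
    next
      case False
      then show ?thesis using s[of "\<zeta> + e"] e s0 by (auto intro: less_imp_le)
    qed
  qed
  show ?thesis
    using u1 ccb s0 wa eq \<zeta>big cont au unfolding r_def
    by (intro exI[of _ u] exI[of _ cc] exI[of _ K] exI[of _ \<zeta>] exI[of _ "s/2"]) auto
qed

lemma series_lemma:
  fixes cf uf :: "nat \<Rightarrow> complex" and gs :: "nat \<Rightarrow> real" and \<gamma> :: real
  assumes cb: "\<And>j. cmod (cf j) \<le> (1/2)^j" and u1: "\<And>j. cmod (uf j) = 1"
    and g0: "\<And>j. 0 \<le> gs j" and g1: "\<And>j. gs j \<le> \<gamma>"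
  defines "t \<equiv> \<lambda>j z. cf j * kern (gs j) (uf j) z"
  shows "\<And>z j. z \<in> disc \<Longrightarrow> cmod (t j z) \<le> (1/2)^j * (1 - cmod z) powr (-\<gamma>)"
    and "\<And>z. z \<in> disc \<Longrightarrow> summable (\<lambda>j. t j z)"
    and "(\<lambda>z. \<Sum>j. t j z) holomorphic_on disc"
    and "\<And>z. z \<in> disc \<Longrightarrow> cmod (\<Sum>j. t j z) \<le> 2 * (1 - cmod z) powr (-\<gamma>)"
proof -
  show tb: "cmod (t j z) \<le> (1/2)^j * (1 - cmod z) powr (-\<gamma>)" if z: "z \<in> disc" for z j
  proof -
    have "cmod (t j z) = cmod (cf j) * cmod (kern (gs j) (uf j) z)" by (simp add: t_def norm_mult)
    also have "\<dots> \<le> (1/2)^j * (1 - cmod z) powr (-\<gamma>)"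
      using cb kern_bound[OF u1 z g0 g1] by (intro mult_mono) auto
    finally show ?thesis .
  qed
  have sg: "summable (\<lambda>j. (1/2::real)^j * C)" for C
    by (intro summable_mult2 summable_geometric) auto
  show sm: "summable (\<lambda>j. t j z)" if z: "z \<in> disc" for z
    by (rule summable_comparison_test'[OF sg[of "(1 - cmod z) powr (-\<gamma>)"]]) (use tb z in auto)
  show "(\<lambda>z. \<Sum>j. t j z) holomorphic_on disc"
  proof (rule holomorphic_uniform_sequence[where f = "\<lambda>n z. \<Sum>j<n. t j z"])
    show "(\<lambda>z. \<Sum>j<n. t j z) holomorphic_on disc" for n
      unfolding t_def by (intro holomorphic_on_sum holomorphic_on_mult holomorphic_on_const kern_hol u1)
    fix x :: complex assume x: "x \<in> disc"
    define d where "d = (1 - cmod x) / 2"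
    have d0: "d > 0" using x by (simp add: d_def)
    have sub: "cball x d \<subseteq> disc"
    proof
      fix z assume "z \<in> cball x d"
      then have cz: "cmod z \<le> cmod x + d" using norm_triangle_ineq2[of z x] by (simp add: dist_norm norm_minus_commute)
      have "cmod x < 1" using x by simp
      then have "cmod z < 1" using cz unfolding d_def by (simp add: field_simps)
      then show "z \<in> disc" by simp
    qed
    have "uniform_limit (cball x d) (\<lambda>n z. \<Sum>j<n. t j z) (\<lambda>z. \<Sum>j. t j z) sequentially"
    proof (rule Weierstrass_m_test[OF _ sg[of "d powr (-\<gamma>)"]])
      fix n z assume z: "z \<in> cball x d"
      then have zd: "z \<in> disc" using sub by auto
      have "cmod z \<le> cmod x + d" using z norm_triangle_ineq2[of z x] by (simp add: dist_norm norm_minus_commute)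
      then have "d \<le> 1 - cmod z" by (simp add: d_def field_simps)
      then have "(1 - cmod z) powr (-\<gamma>) \<le> d powr (-\<gamma>)"
        using d0 g0[of 0] g1[of 0] by (intro powr_mono2') auto
      then show "cmod (t n z) \<le> (1/2)^n * d powr (-\<gamma>)"
        using tb[OF zd, of n] by (smt (verit) mult_left_mono zero_le_power zero_le_divide_1_iff)
    qed
    then show "\<exists>d>0. cball x d \<subseteq> disc \<and> uniform_limit (cball x d) (\<lambda>n z. \<Sum>j<n. t j z) (\<lambda>z. \<Sum>j. t j z) sequentially"
      using d0 sub by blast
  qed simp
  show "cmod (\<Sum>j. t j z) \<le> 2 * (1 - cmod z) powr (-\<gamma>)" if z: "z \<in> disc" for z
  proof -
    have sn: "summable (\<lambda>j. cmod (t j z))"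
      by (rule summable_comparison_test'[OF sg[of "(1 - cmod z) powr (-\<gamma>)"]]) (use tb z in auto)
    have "cmod (\<Sum>j. t j z) \<le> (\<Sum>j. cmod (t j z))" by (rule summable_norm[OF sn])
    also have "\<dots> \<le> (\<Sum>j. (1/2)^j * (1 - cmod z) powr (-\<gamma>))"
      by (rule suminf_le[OF _ sn sg]) (use tb z in auto)
    also have "\<dots> = 2 * (1 - cmod z) powr (-\<gamma>)"
      by (subst suminf_mult2[symmetric, OF summable_geometric]) (auto simp: suminf_geometric)
    finally show ?thesis .
  qed
qed

lemma construct:
  fixes p \<alpha> :: real and w \<phi> :: "complex \<Rightarrow> complex"
  assumes p: "0 < p" and a: "\<alpha> > -1" and whol: "w holomorphic_on disc" and z1: "z1 \<in> disc"
    and wz1: "w z1 \<noteq> 0" and phol: "\<phi> holomorphic_on UNIV" and nc: "\<not> (\<exists>c. \<forall>z. \<phi> z = c)"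
  shows "\<exists>f\<in>bergman_space p \<alpha>. wsup_op \<phi> w f \<notin> bloch_space"
proof -
  obtain c \<rho> where c0: "c > 0" and growth: "\<And>R. R > 0 \<Longrightarrow> \<exists>\<zeta>. cmod \<zeta> \<le> R + \<rho> \<and> c * R \<le> cmod (\<phi> \<zeta>)"
    using phi_growth[OF phol nc] by blast
  define \<gamma> where "\<gamma> = (1 + min \<alpha> 0) / (2 * p)"
  have \<gamma>0: "\<gamma> > 0" using p a by (simp add: \<gamma>_def)
  define gs where "gs m = \<gamma> * (1 - (1/2::real)^m)" for m :: nat
  have gs0: "0 \<le> gs m" for m using \<gamma>0 by (simp add: gs_def power_le_one)
  have gs\<gamma>: "gs m \<le> \<gamma>" for m using \<gamma>0 by (simp add: gs_def)
  have gsinc: "gs m < gs (Suc m)" for m using \<gamma>0 by (simp add: gs_def)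
  define apt where "apt K u = of_real (1 - (1/2::real)^K) * (u::complex)" for K :: nat and u
  define \<delta> where "\<delta> = cmod (w z1)"
  have \<delta>0: "\<delta> > 0" using wz1 by (simp add: \<delta>_def)
  define P where "P n x \<equiv> (case x of (S, \<tau>, B, cc, u) \<Rightarrow> S holomorphic_on disc \<and>
     (\<forall>z\<in>disc. cmod (S z) \<le> B * (1 - cmod z) powr (- gs n)) \<and> B \<ge> 0 \<and> 0 < \<tau> \<and> \<tau> \<le> 1 \<and> cmod u = 1 \<and>
     (n = 0 \<longrightarrow> S = (\<lambda>z. 0) \<and> cc = 0))"
    for n and x :: "(complex \<Rightarrow> complex) \<times> real \<times> real \<times> complex \<times> complex"
  define Q where "Q n x y \<equiv> (case x of (S, \<tau>, B, cc, u) \<Rightarrow> case y of (S', \<tau>', B', cc', u') \<Rightarrow>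
     S' = (\<lambda>z. S z + cc' * kern (gs (Suc n)) u' z) \<and> cmod cc' \<le> (1/2)^(Suc n) * \<tau> \<and> \<tau>' \<le> \<tau> \<and>
     (\<exists>K \<zeta> \<epsilon>. \<epsilon> > 0 \<and> \<delta> \<le> cmod (w (apt K u')) \<and> S' (apt K u') = \<zeta> \<and>
        real (Suc n) * (real K + 1) \<le> cmod (\<phi> \<zeta>) \<and>
        (\<forall>e. cmod e \<le> \<epsilon> \<longrightarrow> cmod (\<phi> (\<zeta> + e) - \<phi> \<zeta>) \<le> 1) \<and> \<tau>' * 2 powr (real K * \<gamma>) \<le> \<epsilon>))"
    for n and x y :: "(complex \<Rightarrow> complex) \<times> real \<times> real \<times> complex \<times> complex"
  have init: "\<exists>x. P 0 x" by (intro exI[of _ "(\<lambda>z. 0, 1, 0, 0, 1)"]) (simp add: P_def)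
  have step: "\<exists>y. P (Suc n) y \<and> Q n x y" if Px: "P n x" for n x
  proof -
    obtain S \<tau> B cc u where x: "x = (S, \<tau>, B, cc, u)" by (cases x) auto
    from Px have Sh: "S holomorphic_on disc" and Sb: "\<And>z. z \<in> disc \<Longrightarrow> cmod (S z) \<le> B * (1 - cmod z) powr (- gs n)"
      and B0: "B \<ge> 0" and \<tau>0: "0 < \<tau>" and \<tau>1: "\<tau> \<le> 1"
      unfolding x P_def by auto
    obtain u' cc' K \<zeta> \<epsilon> where u': "cmod u' = 1" and cc': "cmod cc' \<le> (1/2)^(Suc n) * \<tau>" and \<epsilon>0: "\<epsilon> > 0"
      and wa: "cmod (w z1) \<le> cmod (w (apt K u'))"
      and eq: "S (apt K u') + cc' * kern (gs (Suc n)) u' (apt K u') = \<zeta>"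
      and big: "real (Suc n) * (real K + 1) \<le> cmod (\<phi> \<zeta>)"
      and cont: "\<forall>e. cmod e \<le> \<epsilon> \<longrightarrow> cmod (\<phi> (\<zeta> + e) - \<phi> \<zeta>) \<le> 1"
      using step_lemma[OF phol c0 growth whol z1 gs0 gsinc Sh Sb B0 \<tau>0, of n] unfolding apt_def by blast
    define \<tau>' where "\<tau>' = min \<tau> (\<epsilon> / 2 powr (real K * \<gamma>))"
    define S' where "S' = (\<lambda>z. S z + cc' * kern (gs (Suc n)) u' z)"
    define B' where "B' = B + cmod cc'"
    have \<tau>'0: "\<tau>' > 0" using \<tau>0 \<epsilon>0 by (simp add: \<tau>'_def)
    have \<tau>'le: "\<tau>' * 2 powr (real K * \<gamma>) \<le> \<epsilon>"
    proof -
      have "\<tau>' \<le> \<epsilon> / 2 powr (real K * \<gamma>)" by (simp add: \<tau>'_def)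
      then show ?thesis by (simp add: pos_le_divide_eq)
    qed
    have PS: "P (Suc n) (S', \<tau>', B', cc', u')"
    proof -
      have "S' holomorphic_on disc" unfolding S'_def
        by (intro holomorphic_on_add Sh holomorphic_on_mult holomorphic_on_const kern_hol u')
      moreover have "cmod (S' z) \<le> B' * (1 - cmod z) powr (- gs (Suc n))" if z: "z \<in> disc" for z
      proof -
        have pos: "0 < 1 - cmod z" using z by simp
        have "cmod (S' z) \<le> cmod (S z) + cmod cc' * cmod (kern (gs (Suc n)) u' z)"
          unfolding S'_def by (metis norm_mult norm_triangle_ineq)
        also have "\<dots> \<le> B * (1 - cmod z) powr (- gs n) + cmod cc' * (1 - cmod z) powr (- gs (Suc n))"
          using Sb[OF z] kern_bound[OF u' z gs0 order_refl] by (intro add_mono mult_left_mono) auto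
        also have "B * (1 - cmod z) powr (- gs n) \<le> B * (1 - cmod z) powr (- gs (Suc n))"
          using B0 pos gsinc[of n] by (intro mult_left_mono powr_mono') auto
        finally show ?thesis by (simp add: B'_def algebra_simps)
      qed
      ultimately show ?thesis using B0 \<tau>'0 \<tau>1 u' unfolding P_def B'_def \<tau>'_def by auto
    qed
    have QS: "Q n x (S', \<tau>', B', cc', u')"
      unfolding Q_def x using cc' \<epsilon>0 wa eq big cont \<tau>'le
      by (simp add: S'_def \<tau>'_def \<delta>_def) (intro exI[of _ K] exI[of _ \<zeta>] exI[of _ \<epsilon>], auto simp: \<tau>'_def)
    show ?thesis using PS QS by blast
  qed
  obtain X where PX: "\<And>n. P n (X n)" and QX: "\<And>n. Q n (X n) (X (Suc n))"
    using dependent_nat_choice[of P Q, OF init step] by blast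
  define Sf where "Sf n = fst (X n)" for n
  define \<tau>f where "\<tau>f n = fst (snd (X n))" for n
  define Bf where "Bf n = fst (snd (snd (X n)))" for n
  define cf where "cf n = fst (snd (snd (snd (X n))))" for n
  define uf where "uf n = snd (snd (snd (snd (X n))))" for n
  have Xeq: "X n = (Sf n, \<tau>f n, Bf n, cf n, uf n)" for n by (simp add: Sf_def \<tau>f_def Bf_def cf_def uf_def)
  have Pn: "P n (Sf n, \<tau>f n, Bf n, cf n, uf n)" for n using PX[of n] Xeq[of n] by simp
  have Qn: "Q n (Sf n, \<tau>f n, Bf n, cf n, uf n) (Sf (Suc n), \<tau>f (Suc n), Bf (Suc n), cf (Suc n), uf (Suc n))" for n
    using QX[of n] Xeq[of n] Xeq[of "Suc n"] by simp
  have u1: "cmod (uf n) = 1" for n using Pn[of n] by (simp add: P_def)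
  have \<tau>pos: "0 < \<tau>f n" and \<tau>1: "\<tau>f n \<le> 1" for n using Pn[of n] by (simp_all add: P_def)
  have S0: "Sf 0 = (\<lambda>z. 0)" and c0': "cf 0 = 0" using Pn[of 0] by (simp_all add: P_def)
  have Ssuc: "Sf (Suc n) = (\<lambda>z. Sf n z + cf (Suc n) * kern (gs (Suc n)) (uf (Suc n)) z)" for n
    using Qn[of n] by (simp add: Q_def)
  have cbs: "cmod (cf (Suc n)) \<le> (1/2)^(Suc n) * \<tau>f n" for n using Qn[of n] by (simp add: Q_def)
  have \<tau>dec: "\<tau>f (Suc n) \<le> \<tau>f n" for n using Qn[of n] by (simp add: Q_def)
  have dec: "decseq \<tau>f" by (rule decseq_SucI) (rule \<tau>dec)
  define t where "t = (\<lambda>j z. cf j * kern (gs j) (uf j) z)"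
  have Ssum: "Sf n z = (\<Sum>j<Suc n. t j z)" for n z
  proof (induction n)
    case 0 then show ?case by (simp add: S0 t_def c0')
  next
    case (Suc n) then show ?case by (simp add: Ssuc t_def)
  qed
  have cb: "cmod (cf j) \<le> (1/2)^j" for j
  proof (cases j)
    case 0 then show ?thesis by (simp add: c0')
  next
    case (Suc m)
    have "cmod (cf j) \<le> (1/2)^j * \<tau>f m" using cbs[of m] Suc by simp
    also have "\<dots> \<le> (1/2)^j * 1" using \<tau>1[of m] by (intro mult_left_mono) auto
    finally show ?thesis by simp
  qed
  have cbt: "cmod (cf j) \<le> (1/2)^j * \<tau>f m" if mj: "Suc m \<le> j" for j m
  proof -
    obtain k where j: "j = Suc k" and km: "m \<le> k" using mj by (cases j) auto
    have "cmod (cf j) \<le> (1/2)^j * \<tau>f k" using cbs[of k] j by simp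
    also have "\<dots> \<le> (1/2)^j * \<tau>f m" using decseqD[OF dec km] by (intro mult_left_mono) auto
    finally show ?thesis .
  qed
  note ser = series_lemma[OF cb u1 gs0 gs\<gamma>]
  define f where "f = (\<lambda>z. \<Sum>j. t j z)"
  have fhol: "f holomorphic_on disc" unfolding f_def t_def by (rule ser(3))
  have fbd: "\<And>z. z \<in> disc \<Longrightarrow> cmod (f z) \<le> 2 * (1 - cmod z) powr (-\<gamma>)" unfolding f_def t_def by (rule ser(4))
  have fB: "f \<in> bergman_space p \<alpha>"
  proof (rule bergman_mem[OF p a fhol less_imp_le[OF \<gamma>0] _ _ fbd])
    show "\<gamma> * p \<le> (1 + min \<alpha> 0) / 2" using p by (simp add: \<gamma>_def)
  qed simp
  show ?thesis
  proof (rule bexI[OF _ fB], rule notI)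
    define g where "g = wsup_op \<phi> w f"
    assume "wsup_op \<phi> w f \<in> bloch_space"
    then have gB: "g \<in> bloch_space" by (simp add: g_def)
    obtain M where M0: "M \<ge> 0" and Mg: "\<And>K u. cmod u = 1 \<Longrightarrow> cmod (g (of_real (1 - (1/2)^K) * u) - g 0) \<le> M * real K"
      using bloch_growth[OF gB] by blast
    obtain n where n: "(M + cmod (g 0) + \<delta> + 1) / \<delta> < real n" using reals_Archimedean2 by blast
    have nd: "M + cmod (g 0) + \<delta> + 1 \<le> real (Suc n) * \<delta>"
    proof -
      have "M + cmod (g 0) + \<delta> + 1 < real n * \<delta>" using n \<delta>0 by (simp add: divide_less_eq)
      also have "\<dots> \<le> real (Suc n) * \<delta>" using \<delta>0 by (intro mult_right_mono) auto
      finally show ?thesis by simp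
    qed
    obtain K \<zeta> \<epsilon> where wa: "\<delta> \<le> cmod (w (apt K (uf (Suc n))))"
      and Sa: "Sf (Suc n) (apt K (uf (Suc n))) = \<zeta>"
      and big: "real (Suc n) * (real K + 1) \<le> cmod (\<phi> \<zeta>)"
      and cont: "\<forall>e. cmod e \<le> \<epsilon> \<longrightarrow> cmod (\<phi> (\<zeta> + e) - \<phi> \<zeta>) \<le> 1"
      and \<tau>\<epsilon>: "\<tau>f (Suc n) * 2 powr (real K * \<gamma>) \<le> \<epsilon>"
      using Qn[of n] unfolding Q_def by auto
    define A where "A = apt K (uf (Suc n))"
    have nA: "cmod A = 1 - (1/2)^K"
    proof -
      have "(1/2::real)^K \<le> 1" by (simp add: power_le_one)
      then show ?thesis unfolding A_def apt_def norm_mult norm_of_real u1 by simp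
    qed
    have Adisc: "A \<in> disc" using nA by simp
    have pw: "(1 - cmod A) powr (-\<gamma>) = 2 powr (real K * \<gamma>)" using nA by (simp add: half_pow_powr)
    define kk where "kk = Suc (Suc n)"
    have sm: "summable (\<lambda>j. t j A)" unfolding t_def by (rule ser(2)[OF Adisc])
    have split: "f A = (\<Sum>j. t (j + kk) A) + \<zeta>"
      using suminf_split_initial_segment[OF sm, of kk] Ssum[of "Suc n" A] Sa[folded A_def] by (simp add: f_def kk_def)
    define Y where "Y = \<tau>f (Suc n) * 2 powr (real K * \<gamma>)"
    have Y0: "Y \<ge> 0" using \<tau>pos[of "Suc n"] by (simp add: Y_def)
    have tb: "cmod (t (j + kk) A) \<le> (1/2)^j * (Y/2)" for j
    proof -
      have "cmod (t (j + kk) A) = cmod (cf (j + kk)) * cmod (kern (gs (j + kk)) (uf (j + kk)) A)"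
        by (simp add: t_def norm_mult)
      also have "\<dots> \<le> ((1/2)^(j + kk) * \<tau>f (Suc n)) * (1 - cmod A) powr (-\<gamma>)"
        using cbt[of "Suc n" "j + kk"] kern_bound[OF u1 Adisc gs0 gs\<gamma>] \<tau>pos[of "Suc n"] by (intro mult_mono) (auto simp: kk_def less_imp_le)
      also have "\<dots> = (1/2)^(j+kk) * Y" by (simp add: pw Y_def)
      also have "(1/2::real)^(j+kk) \<le> (1/2)^j * (1/2)"
      proof -
        have "(1/2::real)^n \<le> 1" by (simp add: power_le_one)
        then show ?thesis by (simp add: kk_def power_add)
      qed
      then have "(1/2::real)^(j+kk) * Y \<le> ((1/2)^j * (1/2)) * Y" using Y0 by (intro mult_right_mono) auto
      finally show ?thesis by simp
    qed
    have sg: "summable (\<lambda>j. (1/2::real)^j * (Y/2))" by (intro summable_mult2 summable_geometric) auto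
    have sn: "summable (\<lambda>j. cmod (t (j + kk) A))"
      by (rule summable_comparison_test'[OF sg]) (use tb in auto)
    have tail: "cmod (\<Sum>j. t (j + kk) A) \<le> \<epsilon>"
    proof -
      have "cmod (\<Sum>j. t (j + kk) A) \<le> (\<Sum>j. cmod (t (j + kk) A))" by (rule summable_norm[OF sn])
      also have "\<dots> \<le> (\<Sum>j. (1/2::real)^j * (Y/2))" by (rule suminf_le[OF tb sn sg])
      also have "\<dots> = Y"
        by (subst suminf_mult2[symmetric, OF summable_geometric]) (auto simp: suminf_geometric)
      also have "\<dots> \<le> \<epsilon>" using \<tau>\<epsilon> by (simp add: Y_def)
      finally show ?thesis .
    qed
    have phiA: "cmod (\<phi> (f A)) \<ge> real (Suc n) * (real K + 1) - 1"
    proof -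
      have "cmod (\<phi> (\<zeta> + (\<Sum>j. t (j + kk) A)) - \<phi> \<zeta>) \<le> 1" using cont tail by blast
      then have "cmod (\<phi> (f A) - \<phi> \<zeta>) \<le> 1" using split by (simp add: add.commute)
      then show ?thesis using big norm_triangle_ineq2[of "\<phi> \<zeta>" "\<phi> (f A)"] norm_minus_commute[of "\<phi> (f A)" "\<phi> \<zeta>"]
        by linarith
    qed
    have nn: "real (Suc n) * (real K + 1) - 1 \<ge> 0"
    proof -
      have "1 * 1 \<le> real (Suc n) * (real K + 1)" by (intro mult_mono) auto
      then show ?thesis by simp
    qed
    have lower: "\<delta> * (real (Suc n) * (real K + 1) - 1) \<le> cmod (g A)"
    proof -
      have "\<delta> * (real (Suc n) * (real K + 1) - 1) \<le> cmod (w A) * cmod (\<phi> (f A))"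
        using wa phiA nn \<delta>0 by (intro mult_mono) (auto simp: A_def)
      then show ?thesis by (simp add: g_def wsup_op_def norm_mult)
    qed
    have upper: "cmod (g A) \<le> cmod (g 0) + M * real K"
    proof -
      have "cmod (g A - g 0) \<le> M * real K" using Mg[OF u1[of "Suc n"], of K] by (simp add: A_def apt_def)
      then show ?thesis using norm_triangle_ineq2[of "g A" "g 0"] by linarith
    qed
    have "(M + cmod (g 0) + \<delta> + 1) * (real K + 1) \<le> (real (Suc n) * \<delta>) * (real K + 1)"
      using nd by (intro mult_right_mono) auto
    moreover have "\<delta> * (real (Suc n) * (real K + 1) - 1) = (real (Suc n) * \<delta>) * (real K + 1) - \<delta>"
      by (simp add: algebra_simps)
    moreover have "(M + cmod (g 0) + \<delta> + 1) * (real K + 1) = M * real K + M + cmod (g 0) * real K + cmod (g 0) + (\<delta> + 1) * real K + \<delta> + 1"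
      by (simp add: algebra_simps)
    moreover have "cmod (g 0) * real K \<ge> 0" "(\<delta> + 1) * real K \<ge> 0" using \<delta>0 by auto
    ultimately show False using lower upper M0 by linarith
  qed
qed

lemma bloch_cmult:
  assumes "g \<in> bloch_space" shows "(\<lambda>z. k * g z) \<in> bloch_space"
proof -
  have hol: "g holomorphic_on disc" using assms unfolding bloch_space_def by blast
  from assms obtain M where
    M: "\<And>z. z \<in> disc \<Longrightarrow> (1 - (cmod z)\<^sup>2) * cmod (deriv g z) \<le> M"
    unfolding bloch_space_def mem_Collect_eq by blast
  have "(1 - (cmod z)\<^sup>2) * cmod (deriv (\<lambda>z. k * g z) z) \<le> cmod k * M" if z: "z \<in> disc" for z
  proof -
    have "g field_differentiable at z" using hol z by (meson holomorphic_on_imp_differentiable_at open_ball)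
    then have "deriv (\<lambda>z. k * g z) z = k * deriv g z" by (rule deriv_cmult)
    then have "(1 - (cmod z)\<^sup>2) * cmod (deriv (\<lambda>z. k * g z) z) = cmod k * ((1 - (cmod z)\<^sup>2) * cmod (deriv g z))"
      by (simp add: norm_mult)
    also have "\<dots> \<le> cmod k * M" using M[OF z] by (intro mult_left_mono) auto
    finally show ?thesis .
  qed
  moreover have "(\<lambda>z. k * g z) holomorphic_on disc" by (intro holomorphic_on_mult holomorphic_on_const hol)
  ultimately show ?thesis unfolding bloch_space_def by blast
qed

theorem theorem1:
  fixes p \<alpha> :: real and w \<phi> :: "complex \<Rightarrow> complex"
  assumes "0 < p" and "\<alpha> > -1"
    and "w holomorphic_on disc" and "\<exists>z\<in>disc. w z \<noteq> 0"
    and "\<phi> holomorphic_on UNIV" and "\<exists>z. \<phi> z \<noteq> 0"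
  shows "(\<forall>f\<in>bergman_space p \<alpha>. wsup_op \<phi> w f \<in> bloch_space)
     \<longleftrightarrow> (w \<in> bloch_space \<and> (\<exists>c. \<forall>z. \<phi> z = c))"
proof
  assume H: "\<forall>f\<in>bergman_space p \<alpha>. wsup_op \<phi> w f \<in> bloch_space"
  obtain z1 where z1: "z1 \<in> disc" and wz1: "w z1 \<noteq> 0" using assms(4) by blast
  have const: "\<exists>c. \<forall>z. \<phi> z = c"
  proof (rule ccontr)
    assume nc: "\<not> (\<exists>c. \<forall>z. \<phi> z = c)"
    obtain f where "f \<in> bergman_space p \<alpha>" "wsup_op \<phi> w f \<notin> bloch_space"
      using construct[OF assms(1,2,3) z1 wz1 assms(5) nc] by blast
    with H show False by blast
  qed
  then obtain c where c: "\<And>z. \<phi> z = c" by blast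
  have c0: "c \<noteq> 0" using assms(6) c by auto
  have zB: "(\<lambda>z. 0) \<in> bergman_space p \<alpha>"
    by (rule bergman_mem[OF assms(1,2), of _ 0 0]) (use assms(2) in auto)
  have "wsup_op \<phi> w (\<lambda>z. 0) \<in> bloch_space" using H zB by blast
  then have "(\<lambda>z. c * w z) \<in> bloch_space" by (simp add: wsup_op_def c mult.commute)
  then have "(\<lambda>z. (1/c) * (c * w z)) \<in> bloch_space" by (rule bloch_cmult)
  then have "w \<in> bloch_space" using c0 by simp
  with const show "w \<in> bloch_space \<and> (\<exists>c. \<forall>z. \<phi> z = c)" by blast
next
  assume "w \<in> bloch_space \<and> (\<exists>c. \<forall>z. \<phi> z = c)"
  then obtain c where wB: "w \<in> bloch_space" and c: "\<And>z. \<phi> z = c" by blast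
  show "\<forall>f\<in>bergman_space p \<alpha>. wsup_op \<phi> w f \<in> bloch_space"
  proof
    fix f assume "f \<in> bergman_space p \<alpha>"
    have "(\<lambda>z. c * w z) \<in> bloch_space" by (rule bloch_cmult[OF wB])
    then show "wsup_op \<phi> w f \<in> bloch_space" by (simp add: wsup_op_def c mult.commute)
  qed
qed

end
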